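(* Assume $q_*(y)>0$ if and only if $\mathrm{numK}(y)=0$, and let $T>0$. For every $t\in[0,T)$, every $y\in\mathcal{Y}$, every coordinate $i$ with $y_i=K$ and every $k\in\{1,\dots,K-1\}$, $$\frac{q^\gets_t(y[i\to k])}{q^\gets_t(y)}\le \frac{1}{e^{T-t}-1},$$ where $y[i\to k]$ denotes $y$ with its $i$-th coordinate replaced by $k$.
   Context: Fix integers $K\ge2$, $d\ge1$, $\mathcal{Y}=\{1,\dots,K\}^d$; the symbol $K$ is the mask token and $\mathrm{numK}(y)=\#\{i:y_i=K\}$. The masked forward process is the continuous-time Markov chain on $\mathcal{Y}$ started at $q_*$ in which each non-mask coordinate independently turns into $K$ at rate $1$ and $K$ is absorbing; i.e. with rate function $R^\to(y,y')=1$ if $y,y'$ differ in exactly one coordinate $i$ with $y_i=K$, $R^\to(y,y)=-(d-\mathrm{numK}(y))$, and $0$ otherwise. Its marginals are $q^\to_t$, and $q^\gets_t:=q^\to_{T-t}$. *)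

theory Defs
  imports "HOL-Analysis.Analysis"
begin

definition states :: "nat \<Rightarrow> nat \<Rightarrow> (nat \<Rightarrow> nat) set" where
  "states K d = PiE {..<d} (\<lambda>_. {1..K})"

definition numK :: "nat \<Rightarrow> nat \<Rightarrow> (nat \<Rightarrow> nat) \<Rightarrow> nat" where
  "numK K d y = card {i \<in> {..<d}. y i = K}"

text \<open>Rate function of the masked forward process: a non-mask coordinate jumps to K at rate 1.\<close>
definition rate_fwd :: "nat \<Rightarrow> nat \<Rightarrow> (nat \<Rightarrow> nat) \<Rightarrow> (nat \<Rightarrow> nat) \<Rightarrow> real" where
  "rate_fwd K d y y' =
     (if y' = y then - (real d - real (numK K d y))
      else if (\<exists>i<d. y i \<noteq> K \<and> y' = y(i := K)) then 1 else 0)"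

definition forward_marginals ::
  "nat \<Rightarrow> nat \<Rightarrow> ((nat \<Rightarrow> nat) \<Rightarrow> real) \<Rightarrow> (real \<Rightarrow> (nat \<Rightarrow> nat) \<Rightarrow> real) \<Rightarrow> bool" where
  "forward_marginals K d qstar q \<longleftrightarrow>
     (\<forall>y \<in> states K d. q 0 y = qstar y) \<and>
     (\<forall>t \<ge> 0. \<forall>y' \<in> states K d.
        ((\<lambda>s. q s y') has_real_derivative (\<Sum>y \<in> states K d. q t y * rate_fwd K d y y'))
          (at t within {0..}))"

end

theory Submission
  imports Defs
begin

definition Jset :: "nat \<Rightarrow> nat \<Rightarrow> (nat \<Rightarrow> nat) \<Rightarrow> nat set" where
  "Jset K d y = {j \<in> {..<d}. y j = K}"
definition agree :: "nat \<Rightarrow> nat \<Rightarrow> (nat \<Rightarrow> nat) \<Rightarrow> (nat \<Rightarrow> nat) \<Rightarrow> bool" where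
  "agree K d y x = (\<forall>j<d. y j \<noteq> K \<longrightarrow> x j = y j)"
definition Ssum :: "nat \<Rightarrow> nat \<Rightarrow> ((nat \<Rightarrow> nat) \<Rightarrow> real) \<Rightarrow> (nat \<Rightarrow> nat) \<Rightarrow> real" where
  "Ssum K d qs y = (\<Sum>x\<in>{x\<in>states K d. agree K d y x}. qs x)"
definition Afun :: "nat \<Rightarrow> nat \<Rightarrow> real \<Rightarrow> real" where
  "Afun d m s = exp (- s * (real d - real m)) * (1 - exp (- s)) ^ m"
definition Pfun :: "nat \<Rightarrow> nat \<Rightarrow> ((nat \<Rightarrow> nat) \<Rightarrow> real) \<Rightarrow> real \<Rightarrow> (nat \<Rightarrow> nat) \<Rightarrow> real" where
  "Pfun K d qs s y = Afun d (numK K d y) s * Ssum K d qs y"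

lemma finite_states: "finite (states K d)"
  unfolding states_def by (intro finite_PiE) auto

lemma upd_states: "y \<in> states K d \<Longrightarrow> j < d \<Longrightarrow> k \<in> {1..K} \<Longrightarrow> y(j := k) \<in> states K d"
  unfolding states_def by (auto simp: PiE_iff extensional_def)

lemma states_D: "y \<in> states K d \<Longrightarrow> j < d \<Longrightarrow> y j \<in> {1..K}"
  unfolding states_def by (auto simp: PiE_iff)

lemma numK_Jset: "numK K d y = card (Jset K d y)"
  unfolding numK_def Jset_def by simp

lemma finite_Jset: "finite (Jset K d y)"
  unfolding Jset_def by simp

lemma numK_le: "numK K d y \<le> d"
  unfolding numK_def by (rule order_trans[OF card_mono[of "{..<d}"]]) auto

lemma numK_pos: "i < d \<Longrightarrow> y i = K \<Longrightarrow> numK K d y \<ge> 1"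
proof -
  assume "i < d" "y i = K"
  then have "i \<in> Jset K d y" unfolding Jset_def by simp
  then show ?thesis unfolding numK_Jset using finite_Jset[of K d y]
    by (metis One_nat_def Suc_leI card_gt_0_iff empty_iff)
qed

lemma Jset_upd: "i < d \<Longrightarrow> y i = K \<Longrightarrow> k \<noteq> K \<Longrightarrow> Jset K d (y(i:=k)) = Jset K d y - {i}"
  unfolding Jset_def by auto

lemma numK_upd: "i < d \<Longrightarrow> y i = K \<Longrightarrow> k \<noteq> K \<Longrightarrow> numK K d (y(i:=k)) = numK K d y - 1"
proof -
  assume a: "i < d" "y i = K" "k \<noteq> K"
  then have "i \<in> Jset K d y" unfolding Jset_def by simp
  moreover have "Jset K d (y(i:=k)) = Jset K d y - {i}" by (rule Jset_upd[of i d y K k, OF a(1) a(2) a(3)])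
  ultimately show ?thesis unfolding numK_Jset using finite_Jset[of K d y]
    by (simp add: card_Diff_singleton)
qed

lemma rate_sum:
  assumes K2: "K \<ge> 2" and y': "y' \<in> states K d"
  shows "(\<Sum>y\<in>states K d. f y * rate_fwd K d y y') =
     - (real d - real (numK K d y')) * f y' + (\<Sum>j\<in>Jset K d y'. \<Sum>k\<in>{1..K-1}. f (y'(j:=k)))"
proof -
  let ?P = "{y\<in>states K d. y \<noteq> y' \<and> (\<exists>j<d. y j \<noteq> K \<and> y' = y(j := K))}"
  let ?R = "states K d - {y'} - ?P"
  have fin: "finite (states K d)" by (rule finite_states)
  have dec: "states K d = insert y' (?P \<union> ?R)" using y' by auto
  have "(\<Sum>y\<in>states K d. f y * rate_fwd K d y y') =
        f y' * rate_fwd K d y' y' + ((\<Sum>y\<in>?P. f y * rate_fwd K d y y') + (\<Sum>y\<in>?R. f y * rate_fwd K d y y'))"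
    apply (subst dec)
    apply (subst sum.insert)
      apply (use fin in auto)[2]
    apply (subst sum.union_disjoint)
       apply (use fin in auto)
    done
  also have "(\<Sum>y\<in>?R. f y * rate_fwd K d y y') = 0"
    by (rule sum.neutral) (auto simp: rate_fwd_def)
  also have "(\<Sum>y\<in>?P. f y * rate_fwd K d y y') = (\<Sum>y\<in>?P. f y)"
    by (rule sum.cong) (auto simp: rate_fwd_def)
  also have "?P = (\<lambda>(j,k). y'(j:=k)) ` (SIGMA j:Jset K d y'. {1..K-1})"
  proof (rule set_eqI, rule iffI)
    fix y assume "y \<in> ?P"
    then obtain j where j: "j < d" "y j \<noteq> K" "y' = y(j:=K)" "y \<in> states K d" by auto
    have "y j \<in> {1..K}" using states_D[OF j(4) j(1)] .
    then have "y j \<in> {1..K-1}" using j(2) by auto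
    moreover have "j \<in> Jset K d y'" using j unfolding Jset_def by auto
    moreover have "y = y'(j := y j)" using j(3) by auto
    ultimately show "y \<in> (\<lambda>(j,k). y'(j:=k)) ` (SIGMA j:Jset K d y'. {1..K-1})"
      by (intro image_eqI[where x="(j, y j)"]) auto
  next
    fix y assume "y \<in> (\<lambda>(j,k). y'(j:=k)) ` (SIGMA j:Jset K d y'. {1..K-1})"
    then obtain j k where jk: "j \<in> Jset K d y'" "k \<in> {1..K-1}" "y = y'(j:=k)" by auto
    then have "j < d" "y' j = K" unfolding Jset_def by auto
    moreover have "k \<noteq> K" "k \<in> {1..K}" using jk(2) K2 by auto
    moreover have "y'(j:=k) \<noteq> y'" proof
      assume "y'(j:=k) = y'" then have "(y'(j:=k)) j = y' j" by simp
      then show False using \<open>k \<noteq> K\<close> \<open>y' j = K\<close> by simp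
    qed
    ultimately show "y \<in> ?P" using jk upd_states[OF y'] 
      by (auto intro!: exI[where x=j])
  qed
  also have "(\<Sum>y\<in>(\<lambda>(j,k). y'(j:=k)) ` (SIGMA j:Jset K d y'. {1..K-1}). f y) =
      (\<Sum>p\<in>(SIGMA j:Jset K d y'. {1..K-1}). f ((\<lambda>(j,k). y'(j:=k)) p))"
  proof (rule sum.reindex[unfolded comp_def])
    show "inj_on (\<lambda>(j,k). y'(j:=k)) (SIGMA j:Jset K d y'. {1..K-1})"
    proof (rule inj_onI, clarify)
      fix j k j2 k2 assume a: "j \<in> Jset K d y'" "k \<in> {1..K-1}" "j2 \<in> Jset K d y'" "k2 \<in> {1..K-1}"
        and e: "y'(j := k) = y'(j2 := k2)"
      have "j = j2"
      proof (rule ccontr)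
        assume "j \<noteq> j2"
        then have "k = y' j" using fun_cong[OF e, of j] by simp
        then show False using a unfolding Jset_def by auto
      qed
      moreover then have "k = k2" using fun_cong[OF e, of j] by simp
      ultimately show "j = j2 \<and> k = k2" by simp
    qed
  qed
  also have "\<dots> = (\<Sum>j\<in>Jset K d y'. \<Sum>k\<in>{1..K-1}. f (y'(j:=k)))"
    by (simp add: sum.cartesian_product split_def)
  finally show ?thesis by (simp add: rate_fwd_def)
qed


lemma qs_zero:
  fixes qs :: "(nat \<Rightarrow> nat) \<Rightarrow> real"
  assumes nn: "\<forall>y \<in> states K d. qs y \<ge> 0"
    and supp: "\<forall>y \<in> states K d. qs y > 0 \<longleftrightarrow> numK K d y = 0"
    and x: "x \<in> states K d" and i: "i < d" "x i = K"
  shows "qs x = 0"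
proof -
  have "numK K d x \<ge> 1" using numK_pos[of i d x K] i by simp
  then have "\<not> qs x > 0" using supp x by auto
  moreover have "qs x \<ge> 0" using nn x by blast
  ultimately show ?thesis by linarith
qed

lemma S_split:
  assumes K2: "K \<ge> 2"
    and nn: "\<forall>y \<in> states K d. qs y \<ge> 0"
    and supp: "\<forall>y \<in> states K d. qs y > 0 \<longleftrightarrow> numK K d y = 0"
    and i: "i < d" "y i = K"
  shows "(\<Sum>k\<in>{1..K-1}. Ssum K d qs (y(i:=k))) = Ssum K d qs y"
proof -
  let ?A = "{x\<in>states K d. agree K d y x}"
  have finA: "finite ?A" using finite_states[of K d] by simp
  have "Ssum K d qs y = (\<Sum>x\<in>?A. \<Sum>k\<in>{1..K}. if x i = k then qs x else 0)"
    unfolding Ssum_def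
  proof (rule sum.cong[OF refl])
    fix x assume "x \<in> ?A"
    then have "x i \<in> {1..K}" using states_D[of x K d i] i by auto
    then show "qs x = (\<Sum>k\<in>{1..K}. if x i = k then qs x else 0)"
      by (simp add: sum.delta)
  qed
  also have "\<dots> = (\<Sum>k\<in>{1..K}. \<Sum>x\<in>?A. if x i = k then qs x else 0)"
    by (rule sum.swap)
  also have "\<dots> = (\<Sum>k\<in>insert K {1..K-1}. \<Sum>x\<in>?A. if x i = k then qs x else 0)"
  proof -
    have "{1..K} = insert K {1..K-1}" using K2 by auto
    then show ?thesis by simp
  qed
  also have "\<dots> = (\<Sum>x\<in>?A. if x i = K then qs x else 0) + (\<Sum>k\<in>{1..K-1}. \<Sum>x\<in>?A. if x i = k then qs x else 0)"
    by (subst sum.insert) auto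
  also have "(\<Sum>x\<in>?A. if x i = K then qs x else 0) = 0"
    using qs_zero[OF nn supp _ i(1)] by (intro sum.neutral) auto
  also have "(\<Sum>k\<in>{1..K-1}. \<Sum>x\<in>?A. if x i = k then qs x else 0) = (\<Sum>k\<in>{1..K-1}. Ssum K d qs (y(i:=k)))"
  proof (rule sum.cong[OF refl])
    fix k assume k: "k \<in> {1..K-1}"
    have "(\<Sum>x\<in>?A. if x i = k then qs x else 0) = (\<Sum>x\<in>{x\<in>?A. x i = k}. qs x)"
      by (rule sum.inter_filter[OF finA, symmetric])
    also have "{x\<in>?A. x i = k} = {x\<in>states K d. agree K d (y(i:=k)) x}"
      using k i K2 unfolding agree_def by (auto; metis)
    finally show "(\<Sum>x\<in>?A. if x i = k then qs x else 0) = Ssum K d qs (y(i:=k))"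
      unfolding Ssum_def .
  qed
  finally show ?thesis by simp
qed

lemma A_deriv:
  assumes "m \<le> d"
  shows "(Afun d m has_real_derivative
     (- (real d - real m) * Afun d m t + real m * Afun d (m - 1) t)) (at t within X)"
proof (cases m)
  case 0
  show ?thesis unfolding Afun_def 0
    by (auto intro!: derivative_eq_intros)
next
  case (Suc n)
  have e: "exp (- t * (real d - real n)) = exp (- t * (real d - real (Suc n))) * exp (- t)"
    by (simp add: exp_add[symmetric] algebra_simps)
  show ?thesis unfolding Afun_def Suc
    apply (rule derivative_eq_intros refl | simp)+
    apply (simp add: e algebra_simps exp_add[symmetric])
    done
qed


lemma P_deriv:
  fixes qs :: "(nat \<Rightarrow> nat) \<Rightarrow> real"
  assumes K2: "K \<ge> 2"
    and nn: "\<forall>y \<in> states K d. qs y \<ge> 0"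
    and supp: "\<forall>y \<in> states K d. qs y > 0 \<longleftrightarrow> numK K d y = 0"
    and y: "y \<in> states K d"
  shows "((\<lambda>s. Pfun K d qs s y) has_real_derivative
     (- (real d - real (numK K d y)) * Pfun K d qs t y
       + (\<Sum>j\<in>Jset K d y. \<Sum>k\<in>{1..K-1}. Pfun K d qs t (y(j:=k))))) (at t within X)"
proof -
  let ?m = "numK K d y"
  have inner: "(\<Sum>k\<in>{1..K-1}. Pfun K d qs t (y(j:=k))) = Afun d (?m - 1) t * Ssum K d qs y"
    if j: "j \<in> Jset K d y" for j
  proof -
    have jj: "j < d" "y j = K" using j unfolding Jset_def by auto
    have "(\<Sum>k\<in>{1..K-1}. Pfun K d qs t (y(j:=k))) = (\<Sum>k\<in>{1..K-1}. Afun d (?m - 1) t * Ssum K d qs (y(j:=k)))"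
    proof (rule sum.cong[OF refl])
      fix k assume "k \<in> {1..K-1}"
      then have "k \<noteq> K" by auto
      then have "numK K d (y(j:=k)) = ?m - 1" using numK_upd[of j d y K k] jj by simp
      then show "Pfun K d qs t (y(j:=k)) = Afun d (?m - 1) t * Ssum K d qs (y(j:=k))"
        unfolding Pfun_def by simp
    qed
    also have "\<dots> = Afun d (?m - 1) t * Ssum K d qs y"
      using S_split[OF K2 nn supp, of j y] jj by (simp add: sum_distrib_left[symmetric])
    finally show ?thesis .
  qed
  have "(\<Sum>j\<in>Jset K d y. \<Sum>k\<in>{1..K-1}. Pfun K d qs t (y(j:=k))) = real ?m * Afun d (?m - 1) t * Ssum K d qs y"
    using inner by (simp add: numK_Jset)
  moreover have "((\<lambda>s. Pfun K d qs s y) has_real_derivative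
     ((- (real d - real ?m) * Afun d ?m t + real ?m * Afun d (?m - 1) t)) * Ssum K d qs y) (at t within X)"
    unfolding Pfun_def by (intro DERIV_cmult_right A_deriv numK_le)
  ultimately show ?thesis unfolding Pfun_def by (simp add: algebra_simps)
qed

lemma P0:
  fixes qs :: "(nat \<Rightarrow> nat) \<Rightarrow> real"
  assumes nn: "\<forall>y \<in> states K d. qs y \<ge> 0"
    and supp: "\<forall>y \<in> states K d. qs y > 0 \<longleftrightarrow> numK K d y = 0"
    and y: "y \<in> states K d"
  shows "Pfun K d qs 0 y = qs y"
proof (cases "numK K d y = 0")
  case True
  then have J: "Jset K d y = {}" using finite_Jset[of K d y] by (simp add: numK_Jset)
  have "{x\<in>states K d. agree K d y x} = {y}"
  proof (rule set_eqI, rule iffI)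
    fix x assume x: "x \<in> {x\<in>states K d. agree K d y x}"
    have "\<forall>j<d. y j \<noteq> K" using J unfolding Jset_def by auto
    then have "\<forall>j<d. x j = y j" using x unfolding agree_def by auto
    then have "x = y" using x y unfolding states_def by (intro PiE_ext) auto
    then show "x \<in> {y}" by simp
  qed (use y in \<open>auto simp: agree_def\<close>)
  then show ?thesis unfolding Pfun_def Afun_def Ssum_def using True by simp
next
  case False
  then have "Jset K d y \<noteq> {}" by (auto simp: numK_Jset)
  then obtain i where "i < d" "y i = K" unfolding Jset_def by auto
  then have "qs y = 0" using qs_zero[OF nn supp y] by simp
  then show ?thesis unfolding Pfun_def Afun_def using False by simp
qed


lemma uniq_step:
  fixes qs :: "(nat \<Rightarrow> nat) \<Rightarrow> real" and q :: "real \<Rightarrow> (nat \<Rightarrow> nat) \<Rightarrow> real"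
  assumes K2: "K \<ge> 2"
    and nn: "\<forall>y \<in> states K d. qs y \<ge> 0"
    and supp: "\<forall>y \<in> states K d. qs y > 0 \<longleftrightarrow> numK K d y = 0"
    and fm: "forward_marginals K d qs q"
    and y: "y \<in> states K d"
    and IH: "\<forall>j\<in>Jset K d y. \<forall>k\<in>{1..K-1}. \<forall>s\<ge>0. q s (y(j:=k)) = Pfun K d qs s (y(j:=k))"
  shows "\<forall>s\<ge>0. q s y = Pfun K d qs s y"
proof -
  define c where "c = real d - real (numK K d y)"
  define F where "F t = (\<Sum>j\<in>Jset K d y. \<Sum>k\<in>{1..K-1}. Pfun K d qs t (y(j:=k)))" for t
  define g where "g s = exp (c * s) * (q s y - Pfun K d qs s y)" for s
  have qd: "((\<lambda>s. q s y) has_real_derivative (- c * q t y + F t)) (at t within {0..})"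
    if t: "t \<ge> 0" for t
  proof -
    have "((\<lambda>s. q s y) has_real_derivative (\<Sum>y'\<in>states K d. q t y' * rate_fwd K d y' y)) (at t within {0..})"
      using fm t y unfolding forward_marginals_def by blast
    also have "(\<Sum>y'\<in>states K d. q t y' * rate_fwd K d y' y) = - c * q t y + F t"
      unfolding rate_sum[OF K2 y] c_def F_def using IH t by simp
    finally show ?thesis .
  qed
  have gd: "(g has_real_derivative 0) (at t within {0..})" if t: "t \<in> {0..}" for t
  proof -
    have h1: "((\<lambda>s. exp (c * s)) has_real_derivative exp (c * t) * c) (at t within {0..})"
      by (auto intro!: derivative_eq_intros)
    have h2: "((\<lambda>s. q s y - Pfun K d qs s y) has_real_derivative
        ((- c * q t y + F t) - (- c * Pfun K d qs t y + F t))) (at t within {0..})"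
      using DERIV_diff[OF qd P_deriv[OF K2 nn supp y, of t "{0..}"]] t unfolding F_def c_def by simp
    have "(g has_real_derivative
       (exp (c * t) * c * (q t y - Pfun K d qs t y) + ((- c * q t y + F t) - (- c * Pfun K d qs t y + F t)) * exp (c * t)))
       (at t within {0..})"
      unfolding g_def by (rule DERIV_mult[OF h1 h2])
    then show ?thesis by (simp add: algebra_simps)
  qed
  obtain C where C: "\<forall>x\<in>{0..}. g x = C"
    using has_field_derivative_zero_constant[of "{0::real..}" g] gd by auto
  have "g 0 = 0" unfolding g_def using P0[OF nn supp y] fm y unfolding forward_marginals_def by simp
  then have "C = 0" using C by auto
  then show ?thesis using C unfolding g_def by auto
qed

lemma q_eq_P:
  fixes qs :: "(nat \<Rightarrow> nat) \<Rightarrow> real" and q :: "real \<Rightarrow> (nat \<Rightarrow> nat) \<Rightarrow> real"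
  assumes K2: "K \<ge> 2"
    and nn: "\<forall>y \<in> states K d. qs y \<ge> 0"
    and supp: "\<forall>y \<in> states K d. qs y > 0 \<longleftrightarrow> numK K d y = 0"
    and fm: "forward_marginals K d qs q"
  shows "\<forall>y\<in>states K d. numK K d y = m \<longrightarrow> (\<forall>s\<ge>0. q s y = Pfun K d qs s y)"
proof (induction m)
  case 0
  show ?case
  proof (intro ballI impI)
    fix y assume y: "y \<in> states K d" and "numK K d y = 0"
    then have "Jset K d y = {}" using finite_Jset[of K d y] by (simp add: numK_Jset)
    then show "\<forall>s\<ge>0. q s y = Pfun K d qs s y" using uniq_step[OF K2 nn supp fm y] by simp
  qed
next
  case (Suc m)
  show ?case
  proof (intro ballI impI)
    fix y assume y: "y \<in> states K d" and m: "numK K d y = Suc m"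
    have "\<forall>j\<in>Jset K d y. \<forall>k\<in>{1..K-1}. \<forall>s\<ge>0. q s (y(j:=k)) = Pfun K d qs s (y(j:=k))"
    proof (intro ballI allI impI)
      fix j k s assume j: "j \<in> Jset K d y" and k: "k \<in> {1..K-1}" and s: "(s::real) \<ge> 0"
      have jj: "j < d" "y j = K" using j unfolding Jset_def by auto
      have "k \<noteq> K" "k \<in> {1..K}" using k by auto
      then have "numK K d (y(j:=k)) = m" "y(j:=k) \<in> states K d"
        using numK_upd[of j d y K k] jj m upd_states[OF y jj(1)] by auto
      then show "q s (y(j:=k)) = Pfun K d qs s (y(j:=k))" using Suc s by blast
    qed
    then show "\<forall>s\<ge>0. q s y = Pfun K d qs s y" using uniq_step[OF K2 nn supp fm y] by simp
  qed
qed

lemma A_step: "m \<ge> 1 \<Longrightarrow> Afun d m s = Afun d (m - 1) s * (exp s - 1)"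
proof -
  assume "m \<ge> 1"
  then obtain n where n: "m = Suc n" by (cases m) auto
  have e: "exp (- s * (real d - real (Suc n))) = exp (- s * (real d - real n)) * exp s"
    by (simp add: exp_add[symmetric] algebra_simps)
  have f: "exp s * (1 - exp (-s)) = exp s - 1" by (simp add: algebra_simps exp_minus)
  have "Afun d m s = exp (- s * (real d - real n)) * exp s * ((1 - exp (-s)) * (1 - exp (-s)) ^ n)"
    unfolding Afun_def n e by simp
  also have "\<dots> = exp (- s * (real d - real n)) * (1 - exp (-s)) ^ n * (exp s * (1 - exp (-s)))"
    by (simp only: mult_ac)
  also have "\<dots> = Afun d (m - 1) s * (exp s - 1)" unfolding f Afun_def n by simp
  finally show ?thesis .
qed


lemma S_mono:
  fixes qs :: "(nat \<Rightarrow> nat) \<Rightarrow> real"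
  assumes nn: "\<forall>y \<in> states K d. qs y \<ge> 0" and i: "i < d" "y i = K" "k \<noteq> K"
  shows "Ssum K d qs (y(i:=k)) \<le> Ssum K d qs y" "0 \<le> Ssum K d qs (y(i:=k))"
proof -
  have sub: "{x\<in>states K d. agree K d (y(i:=k)) x} \<subseteq> {x\<in>states K d. agree K d y x}"
    using i unfolding agree_def by auto
  show "Ssum K d qs (y(i:=k)) \<le> Ssum K d qs y"
    unfolding Ssum_def using nn finite_states[of K d] by (intro sum_mono2[OF _ sub]) auto
  show "0 \<le> Ssum K d qs (y(i:=k))"
    unfolding Ssum_def using nn by (intro sum_nonneg) auto
qed

theorem mainTheorem4:
  fixes K d :: nat and qstar :: "(nat \<Rightarrow> nat) \<Rightarrow> real"
    and q :: "real \<Rightarrow> (nat \<Rightarrow> nat) \<Rightarrow> real" and T :: real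
  assumes "K \<ge> 2" and "d \<ge> 1"
    and "\<forall>y \<in> states K d. qstar y \<ge> 0"
    and "(\<Sum>y \<in> states K d. qstar y) = 1"
    and "\<forall>y \<in> states K d. qstar y > 0 \<longleftrightarrow> numK K d y = 0"
    and "forward_marginals K d qstar q"
    and "T > 0"
  shows "\<forall>t \<in> {0..<T}. \<forall>y \<in> states K d. \<forall>i < d. \<forall>k \<in> {1..K-1}. y i = K \<longrightarrow>
           q (T - t) (y(i := k)) / q (T - t) y \<le> 1 / (exp (T - t) - 1)"
proof (intro ballI allI impI)
  fix t y i k
  assume t: "t \<in> {0..<T}" and y: "y \<in> states K d" and i: "i < d" and k: "k \<in> {1..K-1}" and yi: "y i = K"
  define s where "s = T - t"
  have s: "s > 0" using t unfolding s_def by auto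
  note K2 = assms(1) and nn = assms(3) and supp = assms(5) and fm = assms(6)
  have kK: "k \<noteq> K" "k \<in> {1..K}" using k by auto
  define m where "m = numK K d y"
  have m1: "m \<ge> 1" unfolding m_def using numK_pos[of i d y K] i yi by simp
  have y2: "y(i:=k) \<in> states K d" using upd_states[OF y i kK(2)] .
  have m2: "numK K d (y(i:=k)) = m - 1" unfolding m_def using numK_upd[of i d y K k] i yi kK by simp
  have qP: "\<And>z. z \<in> states K d \<Longrightarrow> q s z = Pfun K d qstar s z"
    using q_eq_P[OF K2 nn supp fm] s by auto
  define a where "a = Afun d (m - 1) s"
  define E where "E = exp s - 1"
  define S0 where "S0 = Ssum K d qstar y"
  define S1 where "S1 = Ssum K d qstar (y(i:=k))"
  have apos: "a > 0" unfolding a_def Afun_def using s by (simp add: exp_minus field_simps)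
  have Epos: "E > 0" unfolding E_def using s by simp
  have S: "S1 \<le> S0" "0 \<le> S1" unfolding S0_def S1_def using S_mono[of K d qstar i y k, OF nn i yi kK(1)] by auto
  have q1: "q s (y(i:=k)) = a * S1" using qP[OF y2] unfolding Pfun_def m2 a_def S1_def .
  have q0: "q s y = a * E * S0" using qP[OF y] A_step[OF m1] unfolding Pfun_def a_def E_def S0_def m_def
    by simp
  show "q (T - t) (y(i := k)) / q (T - t) y \<le> 1 / (exp (T - t) - 1)"
    unfolding s_def[symmetric] q1 q0 E_def[symmetric]
  proof (cases "S0 = 0")
    case True
    then show "a * S1 / (a * E * S0) \<le> 1 / E" using Epos by simp
  next
    case False
    then have "S0 > 0" using S by linarith
    then show "a * S1 / (a * E * S0) \<le> 1 / E" using Epos apos S by (simp add: field_simps)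
  qed
qed

end
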